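(* Let $n\ge 2$, $n\ge d\ge 1$, let $\{\tilde V(\theta):\theta\in\Theta\}$ be an ORP of $O(d+1)$ to $e_{d+1}$ with blocks $\tilde V(\theta)=\begin{pmatrix}\tilde O(\theta)&x(\theta)\\ y(\theta)^*&\mu(\theta)\end{pmatrix}$, and $\{\tilde V_d(\phi):\phi\in\Phi\}$ an ORP of $O(d)$ to $e_d$. To each tuple $(\gamma,\theta_1,\dots,\theta_n)$ with $\gamma\in\mathbb{R}$, $|\gamma|\le1$, $\theta_1,\dots,\theta_{n-1}\in\Theta$, $\theta_n\in\Phi$, associate the pair $(A,C)$ where $C$ has first row $(\sqrt{1-\gamma^2},0,\dots,0)$ and $$\begin{pmatrix}C_{2:d,:}\\ A\end{pmatrix}=V^{(1)}(\theta_1)\cdots V^{(n-1)}(\theta_{n-1})V^{(n)}(\theta_n)\begin{pmatrix}0_{d-1,n}\\ P(\gamma)\end{pmatrix},$$ with $V^{(k)}$ and $P(\gamma)$ as defined below. Then this assignment, restricted to tuples with $0<\gamma<1$ and $\mu(\theta_k)>0$ for $1\le k\le n-1$, is a one-to-one correspondence onto the set of strict HOON pairs.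
   Context: ${}^*$ denotes transpose; $C_{2:d,:}$ is the matrix of rows $2,\dots,d$ of $C$. $(A,C)$ ($A$ real $n\times n$, $C$ real $d\times n$) is HOON if $A$ is upper Hessenberg, $C_{1,j}=0$ for $j>1$, and $A^*A=\mathbb{I}_n-C^*C$; it is strict if moreover $A_{i+1,i}>0$ for $1\le i<n$ and $0<C_{1,1}<1$. An orthogonal reduction parameterization (ORP) of $O(m)$ to $e_k$ is a family $\{\tilde Q(\theta):\theta\in\Theta\}$, $\Theta\subset\mathbb{R}^{m-1}$, of real orthogonal $m\times m$ matrices such that for every nonzero $h\in\mathbb{R}^m$ there is a unique $\theta(h)$ with $\tilde Q(\theta)^*h=\|h\|e_k$. For $1\le k<n$, $V^{(k)}(\theta)=\begin{pmatrix}\tilde O(\theta)&0_{d,k-1}&x(\theta)\\ 0_{k-1,d}&\mathbb{I}_{k-1}&0_{k-1,1}\\ y(\theta)^*&0_{1,k-1}&\mu(\theta)\end{pmatrix}\oplus\mathbb{I}_{n-k-1}$, an $(n+d-1)\times(n+d-1)$ matrix; $V^{(n)}(\phi)=\tilde V_d(\phi)\oplus\mathbb{I}_{n-1}$. $P(\gamma)$ is the $n\times n$ matrix with $P_{2,1}=\gamma$, $P_{k+1,k}=1$ for $2\le k<n$, $P_{1,n}=1$, other entries $0$. *)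

theory Defs
  imports "Jordan_Normal_Form.Matrix"
begin

(* Conventions: matrices are Jordan_Normal_Form 'real mat' (0-based indices);
   the paper's 1-based entry M_{i,j} is  M $$ (i-1, j-1).
   Parameters theta in R^(m-1) are 'real vec' of dimension m-1. *)

definition vnorm :: "real vec \<Rightarrow> real" where
  "vnorm h = sqrt (h \<bullet> h)"

definition real_orthogonal :: "nat \<Rightarrow> real mat \<Rightarrow> bool" where
  "real_orthogonal m Q \<longleftrightarrow> Q \<in> carrier_mat m m \<and> transpose_mat Q * Q = 1\<^sub>m m"

definition ORP :: "nat \<Rightarrow> nat \<Rightarrow> (real vec \<Rightarrow> real mat) \<Rightarrow> real vec set \<Rightarrow> bool" where
  "ORP m k Q \<Theta> \<longleftrightarrow>
     \<Theta> \<subseteq> carrier_vec (m - 1) \<and>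
     (\<forall>\<theta>\<in>\<Theta>. real_orthogonal m (Q \<theta>)) \<and>
     (\<forall>h \<in> carrier_vec m. h \<noteq> 0\<^sub>v m \<longrightarrow>
        (\<exists>!\<theta>. \<theta> \<in> \<Theta> \<and> transpose_mat (Q \<theta>) *\<^sub>v h = vnorm h \<cdot>\<^sub>v unit_vec m (k - 1)))"

definition upper_hessenberg :: "real mat \<Rightarrow> bool" where
  "upper_hessenberg A \<longleftrightarrow> (\<forall>i < dim_row A. \<forall>j < dim_col A. j + 1 < i \<longrightarrow> A $$ (i, j) = 0)"

definition HOON :: "nat \<Rightarrow> nat \<Rightarrow> real mat \<Rightarrow> real mat \<Rightarrow> bool" where
  "HOON n d A C \<longleftrightarrow> A \<in> carrier_mat n n \<and> C \<in> carrier_mat d n \<and>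
     upper_hessenberg A \<and>
     (\<forall>j. 0 < j \<and> j < n \<longrightarrow> C $$ (0, j) = 0) \<and>
     transpose_mat A * A = 1\<^sub>m n - transpose_mat C * C"

definition strict_HOON :: "nat \<Rightarrow> nat \<Rightarrow> real mat \<Rightarrow> real mat \<Rightarrow> bool" where
  "strict_HOON n d A C \<longleftrightarrow> HOON n d A C \<and>
     (\<forall>i. i + 1 < n \<longrightarrow> A $$ (i + 1, i) > 0) \<and>
     0 < C $$ (0, 0) \<and> C $$ (0, 0) < 1"

definition blkO :: "nat \<Rightarrow> real mat \<Rightarrow> real mat" where
  "blkO d V = mat d d (\<lambda>(i, j). V $$ (i, j))"
definition blkx :: "nat \<Rightarrow> real mat \<Rightarrow> real vec" where
  "blkx d V = vec d (\<lambda>i. V $$ (i, d))"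
definition blky :: "nat \<Rightarrow> real mat \<Rightarrow> real vec" where
  "blky d V = vec d (\<lambda>j. V $$ (d, j))"
definition blkmu :: "nat \<Rightarrow> real mat \<Rightarrow> real" where
  "blkmu d V = V $$ (d, d)"

definition Vk :: "nat \<Rightarrow> nat \<Rightarrow> nat \<Rightarrow> real mat \<Rightarrow> real mat" where
  "Vk n d k W = mat (n + d - 1) (n + d - 1) (\<lambda>(i, j).
      let p = d + k - 1 in
      if i < d \<and> j < d then blkO d W $$ (i, j)
      else if i < d \<and> j = p then blkx d W $ i
      else if i = p \<and> j < d then blky d W $ j
      else if i = p \<and> j = p then blkmu d W
      else if i = j then 1 else 0)"

definition Vn :: "nat \<Rightarrow> nat \<Rightarrow> real mat \<Rightarrow> real mat" where
  "Vn n d W = mat (n + d - 1) (n + d - 1) (\<lambda>(i, j).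
      if i < d \<and> j < d then W $$ (i, j) else if i = j then 1 else 0)"

definition Pmat :: "nat \<Rightarrow> real \<Rightarrow> real mat" where
  "Pmat n \<gamma> = mat n n (\<lambda>(i, j).
      if i = 1 \<and> j = 0 then \<gamma>
      else if 2 \<le> i \<and> i < n \<and> j = i - 1 then 1
      else if i = 0 \<and> j = n - 1 then 1 else 0)"

(* V^(1)(theta_1) ... V^(n-1)(theta_{n-1}) V^(n)(phi) (0_{d-1,n} ; P(gamma));
   ths ! (k-1) = theta_k *)
definition stacked :: "nat \<Rightarrow> nat \<Rightarrow> (real vec \<Rightarrow> real mat) \<Rightarrow> (real vec \<Rightarrow> real mat)
    \<Rightarrow> real \<Rightarrow> real vec list \<Rightarrow> real vec \<Rightarrow> real mat" where
  "stacked n d Vt Vd \<gamma> ths \<phi> =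
     foldr (\<lambda>k M. Vk n d k (Vt (ths ! (k - 1))) * M) [1..<n] (Vn n d (Vd \<phi>))
     * (0\<^sub>m (d - 1) n @\<^sub>r Pmat n \<gamma>)"

definition assign :: "nat \<Rightarrow> nat \<Rightarrow> (real vec \<Rightarrow> real mat) \<Rightarrow> (real vec \<Rightarrow> real mat)
    \<Rightarrow> real \<times> real vec list \<times> real vec \<Rightarrow> real mat \<times> real mat" where
  "assign n d Vt Vd t = (case t of (\<gamma>, ths, \<phi>) \<Rightarrow>
     let S = stacked n d Vt Vd \<gamma> ths \<phi> in
     (mat n n (\<lambda>(i, j). S $$ (d - 1 + i, j)),
      mat d n (\<lambda>(i, j). if i = 0 then (if j = 0 then sqrt (1 - \<gamma>\<^sup>2) else 0)
                        else S $$ (i - 1, j))))"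

end

theory Submission imports Defs "Jordan_Normal_Form.Determinant" begin

lemma mult_entry:
  assumes "A \<in> carrier_mat a b" "B \<in> carrier_mat b c" "i < a" "j < c"
  shows "(A * B) $$ (i, j) = (\<Sum>l\<in>{0..<b}. A $$ (i, l) * B $$ (l, j))"
  using assms by (auto simp: scalar_prod_def intro!: sum.cong)

definition gemb :: "nat \<Rightarrow> nat set \<Rightarrow> (nat \<Rightarrow> nat) \<Rightarrow> real mat \<Rightarrow> real mat" where
  "gemb N E \<tau> W = mat N N (\<lambda>(i, j). if i \<in> E \<and> j \<in> E then W $$ (\<tau> i, \<tau> j)
      else if i = j then 1 else 0)"

locale embs =
  fixes N m :: nat and E :: "nat set" and \<tau> \<sigma> :: "nat \<Rightarrow> nat"
  assumes E_sub: "E \<subseteq> {0..<N}"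
    and tau_in: "\<And>r. r \<in> E \<Longrightarrow> \<tau> r < m"
    and sig_in: "\<And>i. i < m \<Longrightarrow> \<sigma> i \<in> E"
    and st: "\<And>r. r \<in> E \<Longrightarrow> \<sigma> (\<tau> r) = r"
    and ts: "\<And>i. i < m \<Longrightarrow> \<tau> (\<sigma> i) = i"
begin

lemma gemb_carrier[simp]: "gemb N E \<tau> W \<in> carrier_mat N N"
  by (simp add: gemb_def)

lemma reindex: "(\<Sum>l\<in>E. g l) = (\<Sum>i\<in>{0..<m}. g (\<sigma> i))"
proof -
  have "bij_betw \<sigma> {0..<m} E"
    by (rule bij_betw_byWitness[where f'=\<tau>]) (auto simp: st ts sig_in tau_in)
  thus ?thesis by (simp add: sum.reindex_bij_betw)
qed

lemma finE: "finite E" using E_sub finite_subset by blast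

lemma E_lt: "r \<in> E \<Longrightarrow> r < N" using E_sub by auto

lemma gemb_mult_left:
  assumes X: "X \<in> carrier_mat N c" and i: "i < N" and j: "j < c"
  shows "(gemb N E \<tau> W * X) $$ (i, j) =
     (if i \<in> E then (\<Sum>l\<in>E. W $$ (\<tau> i, \<tau> l) * X $$ (l, j)) else X $$ (i, j))"
proof -
  have "(gemb N E \<tau> W * X) $$ (i, j) = (\<Sum>l\<in>{0..<N}. gemb N E \<tau> W $$ (i, l) * X $$ (l, j))"
    by (rule mult_entry[OF gemb_carrier X i j])
  also have "\<dots> = (if i \<in> E then (\<Sum>l\<in>E. W $$ (\<tau> i, \<tau> l) * X $$ (l, j)) else X $$ (i, j))"
  proof (cases "i \<in> E")
    case True
    have "(\<Sum>l\<in>{0..<N}. gemb N E \<tau> W $$ (i, l) * X $$ (l, j)) = (\<Sum>l\<in>E. gemb N E \<tau> W $$ (i, l) * X $$ (l, j))"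
      by (rule sum.mono_neutral_right) (use E_sub True in \<open>auto simp: gemb_def E_lt\<close>)
    also have "\<dots> = (\<Sum>l\<in>E. W $$ (\<tau> i, \<tau> l) * X $$ (l, j))"
      by (rule sum.cong) (use E_sub True in \<open>auto simp: gemb_def E_lt\<close>)
    finally show ?thesis using True by simp
  next
    case False
    have "(\<Sum>l\<in>{0..<N}. gemb N E \<tau> W $$ (i, l) * X $$ (l, j)) = (\<Sum>l\<in>{0..<N}. (if l = i then X $$ (l, j) else 0))"
      by (rule sum.cong) (use E_sub False i in \<open>auto simp: gemb_def E_lt\<close>)
    also have "\<dots> = X $$ (i, j)" using i by simp
    finally show ?thesis using False by simp
  qed
  finally show ?thesis .
qed

lemma gemb_transpose:
  assumes "W \<in> carrier_mat m m"
  shows "transpose_mat (gemb N E \<tau> W) = gemb N E \<tau> (transpose_mat W)"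
  using assms tau_in by (intro eq_matI) (auto simp: gemb_def)

lemma gemb_mult:
  assumes W1: "W1 \<in> carrier_mat m m" and W2: "W2 \<in> carrier_mat m m"
  shows "gemb N E \<tau> W1 * gemb N E \<tau> W2 = gemb N E \<tau> (W1 * W2)"
proof (rule eq_matI)
  fix i j assume i: "i < dim_row (gemb N E \<tau> (W1 * W2))" and j: "j < dim_col (gemb N E \<tau> (W1 * W2))"
  hence i: "i < N" and j: "j < N" by (auto simp: gemb_def)
  show "(gemb N E \<tau> W1 * gemb N E \<tau> W2) $$ (i, j) = gemb N E \<tau> (W1 * W2) $$ (i, j)"
  proof (cases "i \<in> E")
    case iE: True
    show ?thesis
    proof (cases "j \<in> E")
      case jE: True
      have "(\<Sum>l\<in>E. W1 $$ (\<tau> i, \<tau> l) * gemb N E \<tau> W2 $$ (l, j))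
          = (\<Sum>l\<in>E. W1 $$ (\<tau> i, \<tau> l) * W2 $$ (\<tau> l, \<tau> j))"
        by (rule sum.cong) (use E_sub jE in \<open>auto simp: gemb_def E_lt\<close>)
      also have "\<dots> = (\<Sum>k\<in>{0..<m}. W1 $$ (\<tau> i, k) * W2 $$ (k, \<tau> j))"
        by (simp add: reindex ts)
      also have "\<dots> = (W1 * W2) $$ (\<tau> i, \<tau> j)"
        by (rule mult_entry[symmetric, OF W1 W2]) (use iE jE tau_in in auto)
      finally show ?thesis using iE jE i j
        by (simp add: gemb_mult_left[OF gemb_carrier i j]) (simp add: gemb_def)
    next
      case jE: False
      have "(\<Sum>l\<in>E. W1 $$ (\<tau> i, \<tau> l) * gemb N E \<tau> W2 $$ (l, j)) = 0"
        by (rule sum.neutral) (use E_sub jE j in \<open>auto simp: gemb_def E_lt\<close>)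
      thus ?thesis using iE jE i j
        by (simp add: gemb_mult_left[OF gemb_carrier i j]) (auto simp: gemb_def)
    qed
  next
    case False
    thus ?thesis using i j
      by (simp add: gemb_mult_left[OF gemb_carrier i j]) (auto simp: gemb_def)
  qed
qed (auto simp: gemb_def)

lemma gemb_one: "gemb N E \<tau> (1\<^sub>m m) = 1\<^sub>m N"
  using E_sub tau_in st by (intro eq_matI) (auto simp: gemb_def, metis)

lemma gemb_col_unit:
  assumes X: "X \<in> carrier_mat N c" and j: "j < c" and r: "r < N"
    and col: "\<forall>l<N. X $$ (l, j) = (if l = q then a else 0)"
  shows "(gemb N E \<tau> W * X) $$ (r, j) =
     (if r \<in> E then (if q \<in> E then W $$ (\<tau> r, \<tau> q) * a else 0) else (if r = q then a else 0))"
proof -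
  have "(\<Sum>l\<in>E. W $$ (\<tau> r, \<tau> l) * X $$ (l, j)) = (\<Sum>l\<in>E. (if l = q then W $$ (\<tau> r, \<tau> q) * a else 0))"
    by (rule sum.cong) (auto simp: col E_lt)
  also have "\<dots> = (if q \<in> E then W $$ (\<tau> r, \<tau> q) * a else 0)"
    using finE by (simp add: sum.delta)
  finally show ?thesis using gemb_mult_left[OF X r j] col r by simp
qed

lemma gemb_orth:
  assumes W: "W \<in> carrier_mat m m" and o: "transpose_mat W * W = 1\<^sub>m m"
  shows "transpose_mat (gemb N E \<tau> W) * gemb N E \<tau> W = 1\<^sub>m N"
    "gemb N E \<tau> W * transpose_mat (gemb N E \<tau> W) = 1\<^sub>m N"
proof -
  have o2: "W * transpose_mat W = 1\<^sub>m m"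
    by (rule mat_mult_left_right_inverse[OF _ W o]) (use W in auto)
  show "transpose_mat (gemb N E \<tau> W) * gemb N E \<tau> W = 1\<^sub>m N"
    using W o by (simp add: gemb_transpose gemb_mult gemb_one)
  show "gemb N E \<tau> W * transpose_mat (gemb N E \<tau> W) = 1\<^sub>m N"
    using W o2 by (simp add: gemb_transpose gemb_mult gemb_one)
qed

end


lemma orth_sq:
  fixes Q :: "real mat"
  assumes Q: "Q \<in> carrier_mat m m" and o: "transpose_mat Q * Q = 1\<^sub>m m"
  shows "Q * transpose_mat Q = 1\<^sub>m m"
  by (rule mat_mult_left_right_inverse[OF _ Q o]) (use Q in auto)

lemma orp_exists:
  assumes orp: "ORP m k Q S" and k: "1 \<le> k" "k \<le> m" and h: "h \<in> carrier_vec m" "h \<noteq> 0\<^sub>v m"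
  shows "\<exists>\<theta>\<in>S. Q \<theta> \<in> carrier_mat m m \<and> transpose_mat (Q \<theta>) * Q \<theta> = 1\<^sub>m m \<and>
     (\<forall>i<m. (\<Sum>l\<in>{0..<m}. Q \<theta> $$ (l, i) * h $ l) = vnorm h * (if i = k - 1 then 1 else 0)) \<and>
     (\<forall>i<m. h $ i = vnorm h * Q \<theta> $$ (i, k - 1))"
proof -
  from orp h obtain \<theta> where th: "\<theta> \<in> S" and eq: "transpose_mat (Q \<theta>) *\<^sub>v h = vnorm h \<cdot>\<^sub>v unit_vec m (k - 1)"
    unfolding ORP_def by blast
  from orp th have Qc: "Q \<theta> \<in> carrier_mat m m" and o: "transpose_mat (Q \<theta>) * Q \<theta> = 1\<^sub>m m"
    unfolding ORP_def real_orthogonal_def by auto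
  have o2: "Q \<theta> * transpose_mat (Q \<theta>) = 1\<^sub>m m" by (rule orth_sq[OF Qc o])
  have e1: "(\<Sum>l\<in>{0..<m}. Q \<theta> $$ (l, i) * h $ l) = vnorm h * (if i = k - 1 then 1 else 0)" if i: "i < m" for i
  proof -
    have "(transpose_mat (Q \<theta>) *\<^sub>v h) $ i = (\<Sum>l\<in>{0..<m}. Q \<theta> $$ (l, i) * h $ l)"
      using Qc h i by (auto simp: scalar_prod_def intro!: sum.cong)
    moreover have "(vnorm h \<cdot>\<^sub>v unit_vec m (k - 1)) $ i = vnorm h * (if i = k - 1 then 1 else 0)"
      using i k by simp
    ultimately show ?thesis using eq by simp
  qed
  have e2: "h $ i = vnorm h * Q \<theta> $$ (i, k - 1)" if i: "i < m" for i
  proof -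
    have "(Q \<theta> * transpose_mat (Q \<theta>)) *\<^sub>v h = Q \<theta> *\<^sub>v (transpose_mat (Q \<theta>) *\<^sub>v h)"
      by (rule assoc_mult_mat_vec[OF Qc _ h(1)]) (use Qc in auto)
    hence "h = Q \<theta> *\<^sub>v (vnorm h \<cdot>\<^sub>v unit_vec m (k - 1))" using o2 eq h by simp
    hence "h $ i = (Q \<theta> *\<^sub>v (vnorm h \<cdot>\<^sub>v unit_vec m (k - 1))) $ i" by simp
    also have "\<dots> = (\<Sum>l\<in>{0..<m}. Q \<theta> $$ (i, l) * (vnorm h * (if l = k - 1 then 1 else 0)))"
      using Qc i k by (auto simp: scalar_prod_def intro!: sum.cong)
    also have "\<dots> = (\<Sum>l\<in>{0..<m}. (if l = k - 1 then vnorm h * Q \<theta> $$ (i, l) else 0))"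
      by (rule sum.cong) auto
    also have "\<dots> = vnorm h * Q \<theta> $$ (i, k - 1)" using k by simp
    finally show ?thesis .
  qed
  show ?thesis using th Qc o e1 e2 by blast
qed

lemma orp_uniq:
  assumes orp: "ORP m k Q S" and k: "1 \<le> k" "k \<le> m" and th: "\<theta> \<in> S" "\<theta>' \<in> S"
    and eq: "\<forall>i<m. Q \<theta> $$ (i, k - 1) = Q \<theta>' $$ (i, k - 1)"
  shows "\<theta> = \<theta>'"
proof -
  define h where "h = col (Q \<theta>) (k - 1)"
  have key: "transpose_mat (Q \<psi>) *\<^sub>v h = vnorm h \<cdot>\<^sub>v unit_vec m (k - 1) \<and> vnorm h = 1"
    if ps: "\<psi> \<in> S" and col: "\<forall>i<m. Q \<psi> $$ (i, k - 1) = h $ i" for \<psi>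
  proof -
    from orp ps have Qc: "Q \<psi> \<in> carrier_mat m m" and o: "transpose_mat (Q \<psi>) * Q \<psi> = 1\<^sub>m m"
      unfolding ORP_def real_orthogonal_def by auto
    have hc: "h = col (Q \<psi>) (k - 1)"
      using col Qc orp th k unfolding h_def ORP_def real_orthogonal_def
      by (intro eq_vecI) auto
    have "transpose_mat (Q \<psi>) *\<^sub>v h = col (transpose_mat (Q \<psi>) * Q \<psi>) (k - 1)"
      unfolding hc by (rule col_mult2[symmetric]) (use Qc k in auto)
    also have "\<dots> = unit_vec m (k - 1)" using o k by simp
    finally have e: "transpose_mat (Q \<psi>) *\<^sub>v h = unit_vec m (k - 1)" .
    have "h \<bullet> h = (transpose_mat (Q \<psi>) * Q \<psi>) $$ (k - 1, k - 1)"
      unfolding hc using Qc k by simp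
    also have "\<dots> = 1" using o k by simp
    finally have "vnorm h = 1" by (simp add: vnorm_def)
    thus ?thesis using e by simp
  qed
  from orp th have Qc: "Q \<theta> \<in> carrier_mat m m" unfolding ORP_def real_orthogonal_def by auto
  have a1: "transpose_mat (Q \<theta>) *\<^sub>v h = vnorm h \<cdot>\<^sub>v unit_vec m (k - 1)" and n1: "vnorm h = 1"
    using key[OF th(1)] Qc k unfolding h_def by auto
  have a2: "transpose_mat (Q \<theta>') *\<^sub>v h = vnorm h \<cdot>\<^sub>v unit_vec m (k - 1)"
    using key[OF th(2)] eq Qc k unfolding h_def by auto
  have hc: "h \<in> carrier_vec m" using Qc unfolding h_def by auto
  have hn: "h \<noteq> 0\<^sub>v m"
  proof
    assume "h = 0\<^sub>v m" hence "vnorm h = 0" by (simp add: vnorm_def)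
    with n1 show False by simp
  qed
  from orp hc hn have "\<exists>!\<theta>. \<theta> \<in> S \<and> transpose_mat (Q \<theta>) *\<^sub>v h = vnorm h \<cdot>\<^sub>v unit_vec m (k - 1)"
    unfolding ORP_def by blast
  thus ?thesis using th a1 a2 by blast
qed


locale hoon_setup =
  fixes n d :: nat
    and Vt :: "real vec \<Rightarrow> real mat" and \<Theta> :: "real vec set"
    and Vd :: "real vec \<Rightarrow> real mat" and \<Phi> :: "real vec set"
  assumes n2: "n \<ge> 2" and d1: "1 \<le> d"
    and orpt: "ORP (d + 1) (d + 1) Vt \<Theta>"
    and orpd: "ORP d d Vd \<Phi>"
begin

abbreviation NN where "NN \<equiv> n + d - 1"

definition Ek :: "nat \<Rightarrow> nat set" where "Ek k = {r. r < d \<or> r = d + k - 1}"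
definition tk :: "nat \<Rightarrow> nat" where "tk r = (if r < d then r else d)"
definition sk :: "nat \<Rightarrow> nat \<Rightarrow> nat" where "sk k i = (if i < d then i else d + k - 1)"

lemma embs_k: "1 \<le> k \<Longrightarrow> k < n \<Longrightarrow> embs NN (d + 1) (Ek k) tk (sk k)"
  by unfold_locales (auto simp: Ek_def tk_def sk_def)

lemma embs_n: "embs NN d {r. r < d} id id"
  using n2 by unfold_locales auto

lemma Vk_gemb: "1 \<le> k \<Longrightarrow> k < n \<Longrightarrow> Vk n d k W = gemb NN (Ek k) tk W"
  unfolding Vk_def gemb_def Ek_def tk_def
  by (intro eq_matI) (auto simp: blkO_def blkx_def blky_def blkmu_def Let_def)

lemma Vn_gemb: "Vn n d W = gemb NN {r. r < d} id W"
  unfolding Vn_def gemb_def by (intro eq_matI) auto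

lemma Vt_props: "\<theta> \<in> \<Theta> \<Longrightarrow> Vt \<theta> \<in> carrier_mat (d + 1) (d + 1) \<and> transpose_mat (Vt \<theta>) * Vt \<theta> = 1\<^sub>m (d + 1)"
  using orpt unfolding ORP_def real_orthogonal_def by auto

lemma Vd_props: "\<phi> \<in> \<Phi> \<Longrightarrow> Vd \<phi> \<in> carrier_mat d d \<and> transpose_mat (Vd \<phi>) * Vd \<phi> = 1\<^sub>m d"
  using orpd unfolding ORP_def real_orthogonal_def by auto

definition Zm :: "real \<Rightarrow> real mat" where "Zm \<gamma> = 0\<^sub>m (d - 1) n @\<^sub>r Pmat n \<gamma>"
definition zq :: "nat \<Rightarrow> nat" where "zq j = (if j = n - 1 then d - 1 else d + j)"
definition zc :: "real \<Rightarrow> nat \<Rightarrow> real" where "zc \<gamma> j = (if j = 0 then \<gamma> else 1)"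

lemma Z_carrier[simp]: "Zm \<gamma> \<in> carrier_mat NN n"
proof -
  have "Zm \<gamma> \<in> carrier_mat (d - 1 + n) n" unfolding Zm_def Pmat_def by auto
  moreover have "d - 1 + n = NN" using d1 by simp
  ultimately show ?thesis by simp
qed

lemma Z_carrier'[simp]: "Zm \<gamma> \<in> carrier_mat (n + d - Suc 0) n"
  using Z_carrier by simp

lemma zq_lt: "j < n \<Longrightarrow> zq j < NN"
  using d1 n2 by (auto simp: zq_def)

lemma zq_inj: "i < n \<Longrightarrow> j < n \<Longrightarrow> zq i = zq j \<Longrightarrow> i = j"
  using d1 n2 by (auto simp: zq_def split: if_splits)

lemma Z_entry: "r < NN \<Longrightarrow> j < n \<Longrightarrow> Zm \<gamma> $$ (r, j) = (if r = zq j then zc \<gamma> j else 0)"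
proof -
  assume r: "r < NN" and j: "j < n"
  have Zi: "Zm \<gamma> $$ (r, j) = (if r < d - 1 then 0 else Pmat n \<gamma> $$ (r - (d - 1), j))"
  proof -
    have "Zm \<gamma> = four_block_mat (0\<^sub>m (d - 1) n) (0\<^sub>m (d - 1) 0) (Pmat n \<gamma>) (0\<^sub>m n 0)"
      unfolding Zm_def append_rows_def by (simp add: Pmat_def)
    moreover have "r < dim_row (0\<^sub>m (d - 1) n :: real mat) + dim_row (0\<^sub>m n 0 :: real mat)" using r d1 by simp
    moreover have "j < dim_col (0\<^sub>m (d - 1) n :: real mat) + dim_col (0\<^sub>m n 0 :: real mat)" using j by simp
    ultimately show ?thesis using j by (simp only: index_mat_four_block) simp
  qed
  show ?thesis
  proof (cases "r < d - 1")
    case True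
    moreover have "d - 1 \<le> zq j" by (auto simp: zq_def)
    ultimately show ?thesis using Zi by simp
  next
    case False
    define i where "i = r - (d - 1)"
    have i: "i < n" using r False d1 unfolding i_def by simp
    have ri: "r = i + (d - 1)" using False unfolding i_def by simp
    have P: "Pmat n \<gamma> $$ (i, j) = (if i = 1 \<and> j = 0 then \<gamma> else if 2 \<le> i \<and> i < n \<and> j = i - 1 then 1
        else if i = 0 \<and> j = n - 1 then 1 else 0)" unfolding Pmat_def using i j by simp
    have "Zm \<gamma> $$ (r, j) = Pmat n \<gamma> $$ (i, j)" using Zi False unfolding i_def by simp
    also have "\<dots> = (if r = zq j then zc \<gamma> j else 0)"
    proof (cases "j = n - 1")
      case True
      hence "j \<noteq> 0" using n2 by simp
      thus ?thesis unfolding P zq_def zc_def ri using True d1 j by auto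
    next
      case jn: False
      show ?thesis
      proof (cases "j = 0")
        case True
        thus ?thesis unfolding P zq_def zc_def ri using jn d1 by auto
      next
        case False
        thus ?thesis unfolding P zq_def zc_def ri using jn d1 j by auto
      qed
    qed
    finally show ?thesis .
  qed
qed

lemma tmult_entry:
  assumes "X \<in> carrier_mat a b" "i < b" "j < b"
  shows "(transpose_mat X * X) $$ (i, j) = (\<Sum>l\<in>{0..<a}. X $$ (l, i) * X $$ (l, j))"
  using assms by (auto simp: scalar_prod_def intro!: sum.cong)

lemma ZtZ: "i < n \<Longrightarrow> j < n \<Longrightarrow> (transpose_mat (Zm \<gamma>) * Zm \<gamma>) $$ (i, j) = (if i = j then (zc \<gamma> i)\<^sup>2 else 0)"
proof -
  assume i: "i < n" and j: "j < n"
  have "(transpose_mat (Zm \<gamma>) * Zm \<gamma>) $$ (i, j) = (\<Sum>l\<in>{0..<NN}. Zm \<gamma> $$ (l, i) * Zm \<gamma> $$ (l, j))"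
    by (rule tmult_entry[OF Z_carrier i j])
  also have "\<dots> = (\<Sum>l\<in>{0..<NN}. (if l = zq i then (if i = j then (zc \<gamma> i)\<^sup>2 else 0) else 0))"
    using i j zq_inj by (intro sum.cong) (auto simp: Z_entry power2_eq_square)
  also have "\<dots> = (if i = j then (zc \<gamma> i)\<^sup>2 else 0)" using zq_lt[OF i] by simp
  finally show ?thesis .
qed

lemma orth_pres:
  fixes G Y :: "real mat"
  assumes G: "G \<in> carrier_mat N N" and o: "transpose_mat G * G = 1\<^sub>m N" and Y: "Y \<in> carrier_mat N c"
  shows "transpose_mat (G * Y) * (G * Y) = transpose_mat Y * Y"
proof -
  have "transpose_mat (G * Y) * (G * Y) = (transpose_mat Y * transpose_mat G) * (G * Y)"
    using G Y by (simp add: transpose_mult[OF G Y])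
  also have "\<dots> = transpose_mat Y * ((transpose_mat G * G) * Y)"
    using G Y by (simp add: assoc_mult_mat[of _ c N _ N _ c])
  also have "\<dots> = transpose_mat Y * Y" using o Y by simp
  finally show ?thesis .
qed

definition Tm :: "nat \<Rightarrow> (nat \<Rightarrow> real vec) \<Rightarrow> real vec \<Rightarrow> real mat" where
  "Tm m th \<phi> = foldr (\<lambda>k M. Vk n d k (Vt (th (k - 1))) * M) [m..<n] (Vn n d (Vd \<phi>))"

lemma Tm_n: "Tm n th \<phi> = Vn n d (Vd \<phi>)" by (simp add: Tm_def)

lemma Tm_step: "m < n \<Longrightarrow> Tm m th \<phi> = Vk n d m (Vt (th (m - 1))) * Tm (Suc m) th \<phi>"
  by (simp add: Tm_def upt_rec)

lemma Vk_carrier: "Vk n d k W \<in> carrier_mat NN NN"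
  unfolding Vk_def by (rule mat_carrier)

lemma Vn_carrier: "Vn n d W \<in> carrier_mat NN NN"
  unfolding Vn_def by (rule mat_carrier)

lemma Tm_carrier[simp]: "Tm m th \<phi> \<in> carrier_mat NN NN"
proof -
  have "foldr (\<lambda>k M. Vk n d k (Vt (th (k - 1))) * M) xs (Vn n d (Vd \<phi>)) \<in> carrier_mat NN NN" for xs
  proof (induction xs)
    case Nil thus ?case by (simp only: foldr.simps id_apply Vn_carrier)
  next
    case (Cons a xs)
    thus ?case by (simp only: foldr.simps o_apply) (rule mult_carrier_mat[OF Vk_carrier])
  qed
  thus ?thesis unfolding Tm_def .
qed

lemma Tm_carrier'[simp]: "Tm m th \<phi> \<in> carrier_mat (n + d - Suc 0) (n + d - Suc 0)"
  using Tm_carrier by simp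

lemma Tm_cong: "(\<And>k. m \<le> k + 1 \<Longrightarrow> k + 1 < n \<Longrightarrow> th k = th' k) \<Longrightarrow> Tm m th \<phi> = Tm m th' \<phi>"
proof -
  assume h: "\<And>k. m \<le> k + 1 \<Longrightarrow> k + 1 < n \<Longrightarrow> th k = th' k"
  have "th (x - 1) = th' (x - 1)" if "x \<in> set [m..<n]" for x
    by (rule h) (use that n2 in auto)
  thus ?thesis unfolding Tm_def by (intro foldr_cong) auto
qed

definition valid :: "nat \<Rightarrow> (nat \<Rightarrow> real vec) \<Rightarrow> real vec \<Rightarrow> bool" where
  "valid m th \<phi> \<longleftrightarrow> (\<forall>k. m \<le> k + 1 \<longrightarrow> k + 1 < n \<longrightarrow> th k \<in> \<Theta> \<and> blkmu d (Vt (th k)) > 0) \<and> \<phi> \<in> \<Phi>"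

definition Good :: "real \<Rightarrow> nat \<Rightarrow> real mat \<Rightarrow> bool" where
  "Good \<gamma> m X \<longleftrightarrow> X \<in> carrier_mat NN n \<and> transpose_mat X * X = transpose_mat (Zm \<gamma>) * Zm \<gamma> \<and>
     (\<forall>j r. j + 1 < m \<longrightarrow> r < NN \<longrightarrow> X $$ (r, j) = Zm \<gamma> $$ (r, j)) \<and>
     (\<forall>j r. m \<le> j + 1 \<longrightarrow> j < n \<longrightarrow> d + j < r \<longrightarrow> r < NN \<longrightarrow> X $$ (r, j) = 0) \<and>
     (\<forall>j. m \<le> j + 1 \<longrightarrow> j + 1 < n \<longrightarrow> X $$ (d + j, j) > 0)"

lemma good_orth:
  assumes g: "Good \<gamma> m X" and gp: "\<gamma> > 0" and j: "j + 1 < m" and jn: "j < n" and i: "i < n" and ij: "i \<noteq> j"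
  shows "X $$ (zq j, i) = 0"
proof -
  have Xc: "X \<in> carrier_mat NN n" using g by (simp add: Good_def)
  have "(transpose_mat X * X) $$ (j, i) = (\<Sum>l\<in>{0..<NN}. X $$ (l, j) * X $$ (l, i))"
    by (rule tmult_entry[OF Xc jn i])
  also have "\<dots> = (\<Sum>l\<in>{0..<NN}. (if l = zq j then zc \<gamma> j * X $$ (l, i) else 0))"
    using g j by (intro sum.cong) (auto simp: Good_def Z_entry jn)
  also have "\<dots> = zc \<gamma> j * X $$ (zq j, i)" using zq_lt[OF jn] by simp
  finally have "zc \<gamma> j * X $$ (zq j, i) = 0"
    using g ZtZ[OF jn i] ij by (simp add: Good_def)
  moreover have "zc \<gamma> j \<noteq> 0" using gp by (simp add: zc_def)
  ultimately show ?thesis by simp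
qed

lemma Tm_step_gemb:
  "1 \<le> m \<Longrightarrow> m < n \<Longrightarrow> Tm m th \<phi> * Zm \<gamma> = gemb NN (Ek m) tk (Vt (th (m - 1))) * (Tm (Suc m) th \<phi> * Zm \<gamma>)"
proof -
  assume m1: "1 \<le> m" and mn: "m < n"
  have "Tm m th \<phi> * Zm \<gamma> = (Vk n d m (Vt (th (m - 1))) * Tm (Suc m) th \<phi>) * Zm \<gamma>"
    by (simp only: Tm_step[OF mn])
  also have "\<dots> = Vk n d m (Vt (th (m - 1))) * (Tm (Suc m) th \<phi> * Zm \<gamma>)"
    by (rule assoc_mult_mat[of _ NN NN _ NN _ n]) (rule Vk_carrier, rule Tm_carrier, rule Z_carrier)
  also have "\<dots> = gemb NN (Ek m) tk (Vt (th (m - 1))) * (Tm (Suc m) th \<phi> * Zm \<gamma>)"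
    by (simp only: Vk_gemb[OF m1 mn])
  finally show ?thesis .
qed

lemma Zcol: "r < NN \<Longrightarrow> j < n \<Longrightarrow> Zm \<gamma> $$ (r, j) = (if r = zq j then zc \<gamma> j else 0)"
  by (rule Z_entry)

lemma fwd:
  assumes gp: "\<gamma> > 0"
  shows "m \<le> n \<Longrightarrow> 1 \<le> m \<Longrightarrow> valid m th \<phi> \<Longrightarrow> Good \<gamma> m (Tm m th \<phi> * Zm \<gamma>)"
proof (induction "n - m" arbitrary: m)
  case 0
  hence mn: "m = n" by simp
  have ph: "\<phi> \<in> \<Phi>" using "0.prems"(3) unfolding valid_def by blast
  define W where "W = Vd \<phi>"
  have Wc: "W \<in> carrier_mat d d" and Wo: "transpose_mat W * W = 1\<^sub>m d"
    using Vd_props[OF ph] by (auto simp: W_def)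
  interpret E: embs NN d "{r. r < d}" id id by (rule embs_n)
  define X where "X = gemb NN {r. r < d} id W * Zm \<gamma>"
  have X: "Tm m th \<phi> * Zm \<gamma> = X" unfolding X_def W_def mn Tm_n Vn_gemb ..
  have Xc: "X \<in> carrier_mat NN n" unfolding X_def by (rule mult_carrier_mat[OF E.gemb_carrier Z_carrier])
  have XX: "transpose_mat X * X = transpose_mat (Zm \<gamma>) * Zm \<gamma>"
    unfolding X_def by (rule orth_pres[OF E.gemb_carrier E.gemb_orth(1)[OF Wc Wo] Z_carrier])
  have c1: "X $$ (r, j) = Zm \<gamma> $$ (r, j)" if j: "j + 1 < n" and r: "r < NN" for j r
  proof -
    have "X $$ (r, j) = (if r \<in> {r. r < d} then (if zq j \<in> {r. r < d} then W $$ (id r, id (zq j)) * zc \<gamma> j else 0)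
        else (if r = zq j then zc \<gamma> j else 0))"
      unfolding X_def by (rule E.gemb_col_unit[OF Z_carrier _ r]) (use j Z_entry in auto)
    thus ?thesis using j r by (auto simp: Z_entry zq_def)
  qed
  have c2: "X $$ (r, j) = 0" if "m \<le> j + 1" "j < n" "d + j < r" "r < NN" for j r
    using that mn d1 by simp
  have c3: "X $$ (d + j, j) > 0" if "m \<le> j + 1" "j + 1 < n" for j
    using that mn by simp
  show ?case unfolding X Good_def using Xc XX c1 c2 c3 mn by blast
next
  case (Suc x)
  hence mn: "m < n" and m1: "1 \<le> m" by auto
  have vS: "valid (Suc m) th \<phi>" using Suc.prems by (auto simp: valid_def)
  have IH: "Good \<gamma> (Suc m) (Tm (Suc m) th \<phi> * Zm \<gamma>)"
    by (rule Suc.hyps(1)) (use Suc.hyps(2) mn vS in auto)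
  define Y where "Y = Tm (Suc m) th \<phi> * Zm \<gamma>"
  have Yc: "Y \<in> carrier_mat NN n" unfolding Y_def by (rule mult_carrier_mat[OF Tm_carrier Z_carrier])
  have th: "th (m - 1) \<in> \<Theta>" and mu: "blkmu d (Vt (th (m - 1))) > 0"
    using Suc.prems(3) m1 mn by (auto simp: valid_def)
  define W where "W = Vt (th (m - 1))"
  have Wc: "W \<in> carrier_mat (d + 1) (d + 1)" and Wo: "transpose_mat W * W = 1\<^sub>m (d + 1)"
    using Vt_props[OF th] by (auto simp: W_def)
  have Wdd: "W $$ (d, d) > 0" using mu by (simp add: W_def blkmu_def)
  interpret E: embs NN "d + 1" "Ek m" tk "sk m" by (rule embs_k[OF m1 mn])
  define X where "X = gemb NN (Ek m) tk W * Y"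
  have X: "Tm m th \<phi> * Zm \<gamma> = X" unfolding X_def W_def Y_def by (rule Tm_step_gemb[OF m1 mn])
  have Xc: "X \<in> carrier_mat NN n" unfolding X_def by (rule mult_carrier_mat[OF E.gemb_carrier Yc])
  have XX: "transpose_mat X * X = transpose_mat (Zm \<gamma>) * Zm \<gamma>"
    unfolding X_def using orth_pres[OF E.gemb_carrier E.gemb_orth(1)[OF Wc Wo] Yc] IH
    by (simp add: Y_def Good_def)
  have Ycol: "\<forall>l<NN. Y $$ (l, j) = (if l = zq j then zc \<gamma> j else 0)" if "j + 1 < Suc m" "j < n" for j
    using IH that by (auto simp: Y_def Good_def Z_entry)
  have c1: "X $$ (r, j) = Zm \<gamma> $$ (r, j)" if j: "j + 1 < m" and r: "r < NN" for j r
  proof -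
    have jn: "j < n" using j mn by simp
    have "X $$ (r, j) = (if r \<in> Ek m then (if zq j \<in> Ek m then W $$ (tk r, tk (zq j)) * zc \<gamma> j else 0)
        else (if r = zq j then zc \<gamma> j else 0))"
      unfolding X_def by (rule E.gemb_col_unit[OF Yc jn r Ycol]) (use j jn in auto)
    thus ?thesis using j r mn by (auto simp: Z_entry zq_def Ek_def)
  qed
  have cm: "X $$ (r, m - 1) = (if r \<in> Ek m then W $$ (tk r, d) * zc \<gamma> (m - 1) else 0)" if r: "r < NN" for r
  proof -
    have "X $$ (r, m - 1) = (if r \<in> Ek m then (if zq (m - 1) \<in> Ek m then W $$ (tk r, tk (zq (m - 1))) * zc \<gamma> (m - 1) else 0)
        else (if r = zq (m - 1) then zc \<gamma> (m - 1) else 0))"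
      unfolding X_def by (rule E.gemb_col_unit[OF Yc _ r Ycol]) (use m1 mn in auto)
    moreover have "zq (m - 1) = d + m - 1" using m1 mn by (auto simp: zq_def)
    ultimately show ?thesis using m1 by (auto simp: Ek_def tk_def)
  qed
  have c2: "X $$ (r, j) = 0" if j: "m \<le> j + 1" "j < n" and r: "d + j < r" "r < NN" for j r
  proof (cases "j + 1 = m")
    case True
    thus ?thesis using cm[OF r(2)] r by (auto simp: Ek_def)
  next
    case False
    hence "Suc m \<le> j + 1" using j by simp
    hence "Y $$ (r, j) = 0" using IH j r by (auto simp: Y_def Good_def)
    moreover have "r \<notin> Ek m" using r False j by (auto simp: Ek_def)
    ultimately show ?thesis unfolding X_def using E.gemb_mult_left[OF Yc r(2) j(2)] by simp
  qed
  have c3: "X $$ (d + j, j) > 0" if j: "m \<le> j + 1" "j + 1 < n" for j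
  proof (cases "j + 1 = m")
    case True
    hence "X $$ (d + j, j) = W $$ (d, d) * zc \<gamma> (m - 1)"
      using cm[of "d + j"] mn by (auto simp: Ek_def tk_def)
    moreover have "zc \<gamma> (m - 1) > 0" using gp by (simp add: zc_def)
    ultimately show ?thesis using Wdd by simp
  next
    case False
    hence "Suc m \<le> j + 1" using j by simp
    hence "Y $$ (d + j, j) > 0" using IH j by (auto simp: Y_def Good_def)
    moreover have "d + j \<notin> Ek m" using False j m1 by (auto simp: Ek_def)
    moreover have "d + j < NN" using j by simp
    ultimately show ?thesis unfolding X_def using E.gemb_mult_left[OF Yc, of "d + j" j] j by simp
  qed
  show ?case unfolding X Good_def using Xc XX c1 c2 c3 by blast
qed

lemma cancel_left:
  fixes G Y Y' :: "real mat"
  assumes G: "G \<in> carrier_mat N N" and o: "transpose_mat G * G = 1\<^sub>m N"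
    and Y: "Y \<in> carrier_mat N c" and Y': "Y' \<in> carrier_mat N c" and eq: "G * Y = G * Y'"
  shows "Y = Y'"
proof -
  have "Y = (transpose_mat G * G) * Y" using o Y by simp
  also have "\<dots> = transpose_mat G * (G * Y)" by (rule assoc_mult_mat[of _ N N _ N _ c]) (use G Y in auto)
  also have "\<dots> = transpose_mat G * (G * Y')" using eq by simp
  also have "\<dots> = (transpose_mat G * G) * Y'" by (rule assoc_mult_mat[symmetric, of _ N N _ N _ c]) (use G Y' in auto)
  also have "\<dots> = Y'" using o Y' by simp
  finally show ?thesis .
qed

lemma undo_left:
  fixes G X :: "real mat"
  assumes G: "G \<in> carrier_mat N N" and o: "G * transpose_mat G = 1\<^sub>m N" and X: "X \<in> carrier_mat N c"
  shows "G * (transpose_mat G * X) = X"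
proof -
  have "G * (transpose_mat G * X) = (G * transpose_mat G) * X"
    by (rule assoc_mult_mat[symmetric, of _ N N _ N _ c]) (use G X in auto)
  also have "\<dots> = X" using o X by simp
  finally show ?thesis .
qed

lemma injl:
  assumes gp: "\<gamma> > 0"
  shows "m \<le> n \<Longrightarrow> 1 \<le> m \<Longrightarrow> valid m th \<phi> \<Longrightarrow> valid m th' \<phi>' \<Longrightarrow>
    Tm m th \<phi> * Zm \<gamma> = Tm m th' \<phi>' * Zm \<gamma> \<Longrightarrow>
    (\<forall>k. m \<le> k + 1 \<longrightarrow> k + 1 < n \<longrightarrow> th k = th' k) \<and> \<phi> = \<phi>'"
proof (induction "n - m" arbitrary: m)
  case 0
  hence mn: "m = n" by simp
  have ph: "\<phi> \<in> \<Phi>" using "0.prems"(3) unfolding valid_def by blast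
  have ph': "\<phi>' \<in> \<Phi>" using "0.prems"(4) unfolding valid_def by blast
  interpret E: embs NN d "{r. r < d}" id id by (rule embs_n)
  have col: "(gemb NN {r. r < d} id (Vd \<psi>) * Zm \<gamma>) $$ (i, n - 1) = Vd \<psi> $$ (i, d - 1)" if i: "i < d" for i \<psi>
  proof -
    have "(gemb NN {r. r < d} id (Vd \<psi>) * Zm \<gamma>) $$ (i, n - 1) =
       (if i \<in> {r. r < d} then (if zq (n - 1) \<in> {r. r < d} then Vd \<psi> $$ (id i, id (zq (n - 1))) * zc \<gamma> (n - 1) else 0)
        else (if i = zq (n - 1) then zc \<gamma> (n - 1) else 0))"
      by (rule E.gemb_col_unit[OF Z_carrier]) (use i n2 Z_entry in auto)
    thus ?thesis using i d1 n2 by (simp add: zq_def zc_def)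
  qed
  have eq: "gemb NN {r. r < d} id (Vd \<phi>) * Zm \<gamma> = gemb NN {r. r < d} id (Vd \<phi>') * Zm \<gamma>"
    using "0.prems"(5) unfolding mn Tm_n Vn_gemb .
  have "\<forall>i<d. Vd \<phi> $$ (i, d - 1) = Vd \<phi>' $$ (i, d - 1)"
    using col[of _ \<phi>] col[of _ \<phi>'] eq by metis
  hence "\<phi> = \<phi>'" using orp_uniq[OF orpd _ _ ph ph'] d1 by simp
  thus ?case using mn by simp
next
  case (Suc x)
  hence mn: "m < n" and m1: "1 \<le> m" by auto
  have vS: "valid (Suc m) th \<phi>" "valid (Suc m) th' \<phi>'" using Suc.prems by (auto simp: valid_def)
  have th: "th (m - 1) \<in> \<Theta>" "th' (m - 1) \<in> \<Theta>"
    using Suc.prems(3,4) m1 mn by (auto simp: valid_def)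
  interpret E: embs NN "d + 1" "Ek m" tk "sk m" by (rule embs_k[OF m1 mn])
  define Y where "Y = Tm (Suc m) th \<phi> * Zm \<gamma>"
  define Y' where "Y' = Tm (Suc m) th' \<phi>' * Zm \<gamma>"
  have Yc: "Y \<in> carrier_mat NN n" unfolding Y_def by (rule mult_carrier_mat[OF Tm_carrier Z_carrier])
  have Yc': "Y' \<in> carrier_mat NN n" unfolding Y'_def by (rule mult_carrier_mat[OF Tm_carrier Z_carrier])
  have GY: "Good \<gamma> (Suc m) Y" unfolding Y_def by (rule fwd[OF gp]) (use mn vS in auto)
  have GY': "Good \<gamma> (Suc m) Y'" unfolding Y'_def by (rule fwd[OF gp]) (use mn vS in auto)
  have pz: "zq (m - 1) = d + m - 1" using m1 mn by (auto simp: zq_def)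
  have col: "(gemb NN (Ek m) tk W * Z) $$ (sk m i, m - 1) = W $$ (i, d) * zc \<gamma> (m - 1)"
    if i: "i < d + 1" and Zc: "Z \<in> carrier_mat NN n" and g: "Good \<gamma> (Suc m) Z" for i W Z
  proof -
    have Zcol: "\<forall>l<NN. Z $$ (l, m - 1) = (if l = zq (m - 1) then zc \<gamma> (m - 1) else 0)"
      using g m1 mn by (auto simp: Good_def Z_entry)
    have r: "sk m i < NN" using E.sig_in[OF i] E.E_lt by blast
    have "(gemb NN (Ek m) tk W * Z) $$ (sk m i, m - 1) =
       (if sk m i \<in> Ek m then (if zq (m - 1) \<in> Ek m then W $$ (tk (sk m i), tk (zq (m - 1))) * zc \<gamma> (m - 1) else 0)
        else (if sk m i = zq (m - 1) then zc \<gamma> (m - 1) else 0))"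
      by (rule E.gemb_col_unit[OF Zc _ r Zcol]) (use mn in auto)
    moreover have "tk (zq (m - 1)) = d" using pz m1 by (simp add: tk_def)
    moreover have "zq (m - 1) \<in> Ek m" using pz by (simp add: Ek_def)
    ultimately show ?thesis using E.sig_in[OF i] E.ts[OF i] by simp
  qed
  have eq: "gemb NN (Ek m) tk (Vt (th (m - 1))) * Y = gemb NN (Ek m) tk (Vt (th' (m - 1))) * Y'"
    using Suc.prems(5) unfolding Y_def Y'_def Tm_step_gemb[OF m1 mn] .
  have "\<forall>i<d + 1. Vt (th (m - 1)) $$ (i, d) = Vt (th' (m - 1)) $$ (i, d)"
  proof (intro allI impI)
    fix i assume i: "i < d + 1"
    have "Vt (th (m - 1)) $$ (i, d) * zc \<gamma> (m - 1) = Vt (th' (m - 1)) $$ (i, d) * zc \<gamma> (m - 1)"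
    proof -
      have a: "(gemb NN (Ek m) tk (Vt (th (m - 1))) * Y) $$ (sk m i, m - 1) = Vt (th (m - 1)) $$ (i, d) * zc \<gamma> (m - 1)"
        by (rule col[OF i Yc GY])
      have b: "(gemb NN (Ek m) tk (Vt (th' (m - 1))) * Y') $$ (sk m i, m - 1) = Vt (th' (m - 1)) $$ (i, d) * zc \<gamma> (m - 1)"
        by (rule col[OF i Yc' GY'])
      have c: "(gemb NN (Ek m) tk (Vt (th (m - 1))) * Y) $$ (sk m i, m - 1) = (gemb NN (Ek m) tk (Vt (th' (m - 1))) * Y') $$ (sk m i, m - 1)"
        using eq by (rule arg_cong)
      show ?thesis using a b c by linarith
    qed
    moreover have "zc \<gamma> (m - 1) \<noteq> 0" using gp by (simp add: zc_def)
    ultimately show "Vt (th (m - 1)) $$ (i, d) = Vt (th' (m - 1)) $$ (i, d)" by simp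
  qed
  hence tq: "th (m - 1) = th' (m - 1)" using orp_uniq[OF orpt _ _ th] by simp
  have Wc: "Vt (th (m - 1)) \<in> carrier_mat (d + 1) (d + 1)" and Wo: "transpose_mat (Vt (th (m - 1))) * Vt (th (m - 1)) = 1\<^sub>m (d + 1)"
    using Vt_props[OF th(1)] by auto
  have "Y = Y'"
    by (rule cancel_left[OF E.gemb_carrier E.gemb_orth(1)[OF Wc Wo] Yc Yc']) (use eq tq in simp)
  hence IH: "(\<forall>k. Suc m \<le> k + 1 \<longrightarrow> k + 1 < n \<longrightarrow> th k = th' k) \<and> \<phi> = \<phi>'"
    using Suc.hyps(1)[of "Suc m"] Suc.hyps(2) mn vS unfolding Y_def Y'_def by simp
  show ?case
  proof (intro conjI allI impI)
    fix k assume k: "m \<le> k + 1" "k + 1 < n"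
    show "th k = th' k"
    proof (cases "k = m - 1")
      case True thus ?thesis using tq by simp
    next
      case False
      hence "Suc m \<le> k + 1" using k m1 by simp
      thus ?thesis using IH k by blast
    qed
  next
    show "\<phi> = \<phi>'" using IH by blast
  qed
qed



lemma good_zero:
  assumes g: "Good \<gamma> m X" and gp: "\<gamma> > 0" and m1: "1 \<le> m" and mn: "m \<le> n"
    and r: "r < NN" and rd: "d \<le> r" and rp: "r \<noteq> d + m - 1"
  shows "X $$ (r, m - 1) = 0"
proof (cases "r < d + m - 1")
  case True
  define j where "j = r - d"
  have j: "j + 1 < m" "j < n" using True rd mn unfolding j_def by auto
  have "zq j = r" using True rd mn unfolding j_def zq_def by auto
  moreover have "X $$ (zq j, m - 1) = 0"
    by (rule good_orth[OF g gp j]) (use m1 mn j in auto)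
  ultimately show ?thesis by simp
next
  case False
  hence "d + (m - 1) < r" using rp m1 by auto
  thus ?thesis using g m1 mn r unfolding Good_def by auto
qed

lemma good_norm:
  assumes g: "Good \<gamma> m X" and m1: "1 \<le> m" and mn: "m \<le> n" and E: "E \<subseteq> {0..<NN}"
    and z: "\<And>r. r < NN \<Longrightarrow> r \<notin> E \<Longrightarrow> X $$ (r, m - 1) = 0"
  shows "(\<Sum>l\<in>E. X $$ (l, m - 1) * X $$ (l, m - 1)) = (zc \<gamma> (m - 1))\<^sup>2"
proof -
  have Xc: "X \<in> carrier_mat NN n" using g by (simp add: Good_def)
  have i: "m - 1 < n" using m1 mn by simp
  have "(\<Sum>l\<in>E. X $$ (l, m - 1) * X $$ (l, m - 1)) = (\<Sum>l\<in>{0..<NN}. X $$ (l, m - 1) * X $$ (l, m - 1))"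
    by (rule sum.mono_neutral_left) (use E z in auto)
  also have "\<dots> = (transpose_mat X * X) $$ (m - 1, m - 1)" by (rule tmult_entry[symmetric, OF Xc i i])
  also have "\<dots> = (zc \<gamma> (m - 1))\<^sup>2" using g ZtZ[OF i i] by (simp add: Good_def)
  finally show ?thesis .
qed

lemma srj:
  assumes gp: "\<gamma> > 0"
  shows "m \<le> n \<Longrightarrow> 1 \<le> m \<Longrightarrow> Good \<gamma> m X \<Longrightarrow> \<exists>th \<phi>. valid m th \<phi> \<and> Tm m th \<phi> * Zm \<gamma> = X"
proof (induction "n - m" arbitrary: m X)
  case 0
  hence mn: "m = n" and g: "Good \<gamma> n X" by auto
  have Xc: "X \<in> carrier_mat NN n" using g by (simp add: Good_def)
  interpret E: embs NN d "{r. r < d}" id id by (rule embs_n)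
  define h where "h = vec d (\<lambda>i. X $$ (i, n - 1))"
  have hc: "h \<in> carrier_vec d" unfolding h_def by simp
  have Xz: "X $$ (r, n - 1) = 0" if "r < NN" "r \<notin> {r. r < d}" for r
    using good_zero[OF g gp _ order.refl that(1)] that n2 by auto
  have "(\<Sum>l\<in>{r. r < d}. X $$ (l, n - 1) * X $$ (l, n - 1)) = (zc \<gamma> (n - 1))\<^sup>2"
    by (rule good_norm[OF g _ order.refl]) (use n2 Xz in auto)
  hence "h \<bullet> h = 1" using n2 unfolding h_def scalar_prod_def zc_def
    by (simp add: atLeast0LessThan lessThan_def)
  hence hn: "vnorm h = 1" by (simp add: vnorm_def)
  have hnz: "h \<noteq> 0\<^sub>v d"
  proof
    assume "h = 0\<^sub>v d" hence "vnorm h = 0" by (simp add: vnorm_def)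
    with hn show False by simp
  qed
  obtain \<phi> where ph: "\<phi> \<in> \<Phi>" and Wc: "Vd \<phi> \<in> carrier_mat d d" and Wo: "transpose_mat (Vd \<phi>) * Vd \<phi> = 1\<^sub>m d"
    and e1: "\<forall>i<d. (\<Sum>l\<in>{0..<d}. Vd \<phi> $$ (l, i) * h $ l) = vnorm h * (if i = d - 1 then 1 else 0)"
    using orp_exists[OF orpd _ _ hc hnz] d1 by auto
  define W where "W = Vd \<phi>"
  have WTc: "transpose_mat W \<in> carrier_mat d d" using Wc by (simp add: W_def)
  have WTo: "transpose_mat (transpose_mat W) * transpose_mat W = 1\<^sub>m d"
    using orth_sq[OF Wc Wo] by (simp add: W_def)
  define X' where "X' = gemb NN {r. r < d} id (transpose_mat W) * X"
  have X'Z: "X' = Zm \<gamma>"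
  proof (rule eq_matI)
    fix r j assume "r < dim_row (Zm \<gamma>)" "j < dim_col (Zm \<gamma>)"
    hence r: "r < NN" and j: "j < n" using carrier_matD[OF Z_carrier[of \<gamma>]] by auto
    show "X' $$ (r, j) = Zm \<gamma> $$ (r, j)"
    proof (cases "j = n - 1")
      case False
      hence j1: "j + 1 < n" using j by simp
      have "X' $$ (r, j) = (if r \<in> {r. r < d} then (if zq j \<in> {r. r < d} then transpose_mat W $$ (id r, id (zq j)) * zc \<gamma> j else 0)
          else (if r = zq j then zc \<gamma> j else 0))"
        unfolding X'_def by (rule E.gemb_col_unit[OF Xc j r]) (use g j1 in \<open>auto simp: Good_def Z_entry\<close>)
      thus ?thesis using False r j by (auto simp: Z_entry zq_def)
    next
      case True
      show ?thesis
      proof (cases "r < d")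
        case rd: True
        have "X' $$ (r, j) = (\<Sum>l\<in>{r. r < d}. transpose_mat W $$ (r, l) * X $$ (l, j))"
          unfolding X'_def using E.gemb_mult_left[OF Xc r j] rd by simp
        also have "\<dots> = (\<Sum>l\<in>{0..<d}. W $$ (l, r) * h $ l)"
          using Wc rd True unfolding h_def W_def by (intro sum.cong) auto
        also have "\<dots> = (if r = d - 1 then 1 else 0)" using e1 rd hn unfolding W_def by simp
        finally show ?thesis using True rd r n2 by (simp add: Z_entry zq_def zc_def)
      next
        case rd: False
        have "X' $$ (r, j) = X $$ (r, j)"
          unfolding X'_def using E.gemb_mult_left[OF Xc r j] rd by simp
        thus ?thesis using Xz[OF r] rd True r j d1 by (simp add: Z_entry zq_def)
      qed
    qed
  qed (use Xc carrier_matD[OF Z_carrier[of \<gamma>]] carrier_matD[OF E.gemb_carrier[of "transpose_mat W"]] in \<open>auto simp: X'_def\<close>)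
  have "Tm n (\<lambda>_. undefined) \<phi> * Zm \<gamma> = X"
  proof -
    have "Tm n (\<lambda>_. undefined) \<phi> * Zm \<gamma> = gemb NN {r. r < d} id W * (transpose_mat (gemb NN {r. r < d} id W) * X)"
      unfolding Tm_n Vn_gemb X'Z[symmetric] X'_def W_def E.gemb_transpose[OF Wc] by (rule refl)
    also have "\<dots> = X" by (rule undo_left[OF E.gemb_carrier E.gemb_orth(2)[OF Wc[folded W_def] Wo[folded W_def]] Xc])
    finally show ?thesis .
  qed
  moreover have "valid n (\<lambda>_. undefined) \<phi>" using ph by (auto simp: valid_def)
  ultimately show ?case using mn by blast
next
  case (Suc x)
  hence mn: "m < n" and m1: "1 \<le> m" and g: "Good \<gamma> m X" by auto
  have Xc: "X \<in> carrier_mat NN n" using g by (simp add: Good_def)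
  interpret E: embs NN "d + 1" "Ek m" tk "sk m" by (rule embs_k[OF m1 mn])
  define p where "p = d + m - 1"
  have pz: "zq (m - 1) = p" using m1 mn by (auto simp: zq_def p_def)
  have Xz: "X $$ (r, m - 1) = 0" if "r < NN" "r \<notin> Ek m" for r
    using good_zero[OF g gp m1 _ that(1)] that mn by (auto simp: Ek_def)
  define h where "h = vec (d + 1) (\<lambda>i. X $$ (sk m i, m - 1))"
  have hc: "h \<in> carrier_vec (d + 1)" unfolding h_def by simp
  define a where "a = zc \<gamma> (m - 1)"
  have ap: "a > 0" using gp by (simp add: a_def zc_def)
  have "(\<Sum>l\<in>Ek m. X $$ (l, m - 1) * X $$ (l, m - 1)) = a\<^sup>2"
    unfolding a_def by (rule good_norm[OF g m1 _ E.E_sub Xz]) (use mn in auto)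
  hence "h \<bullet> h = a\<^sup>2" unfolding h_def scalar_prod_def E.reindex
    by (simp add: atLeast0LessThan)
  hence hn: "vnorm h = a" using ap by (simp add: vnorm_def)
  have hnz: "h \<noteq> 0\<^sub>v (d + 1)"
  proof
    assume "h = 0\<^sub>v (d + 1)" hence "vnorm h = 0" by (simp add: vnorm_def)
    with hn ap show False by simp
  qed
  obtain \<theta> where th: "\<theta> \<in> \<Theta>" and Wc: "Vt \<theta> \<in> carrier_mat (d + 1) (d + 1)"
    and Wo: "transpose_mat (Vt \<theta>) * Vt \<theta> = 1\<^sub>m (d + 1)"
    and e1: "\<forall>i<d + 1. (\<Sum>l\<in>{0..<d + 1}. Vt \<theta> $$ (l, i) * h $ l) = vnorm h * (if i = d + 1 - 1 then 1 else 0)"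
    and e2: "\<forall>i<d + 1. h $ i = vnorm h * Vt \<theta> $$ (i, d + 1 - 1)"
    using orp_exists[OF orpt _ _ hc hnz] by auto
  define W where "W = Vt \<theta>"
  have Wc': "W \<in> carrier_mat (d + 1) (d + 1)" using Wc by (simp add: W_def)
  have WTc: "transpose_mat W \<in> carrier_mat (d + 1) (d + 1)" using Wc by (simp add: W_def)
  have WTo: "transpose_mat (transpose_mat W) * transpose_mat W = 1\<^sub>m (d + 1)"
    using orth_sq[OF Wc Wo] by (simp add: W_def)
  have hd: "h $ d = X $$ (p, m - 1)" unfolding h_def p_def by (simp add: sk_def)
  have "X $$ (p, m - 1) > 0" using g m1 mn unfolding Good_def p_def
    by (metis Nat.add_diff_assoc One_nat_def le_add_diff_inverse2 le_refl)
  hence "a * W $$ (d, d) > 0" using e2 hd hn unfolding W_def by auto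
  hence Wdd: "W $$ (d, d) > 0" using ap by (simp add: zero_less_mult_iff)
  define X' where "X' = gemb NN (Ek m) tk (transpose_mat W) * X"
  have X'c: "X' \<in> carrier_mat NN n" unfolding X'_def by (rule mult_carrier_mat[OF E.gemb_carrier Xc])
  have X'X: "transpose_mat X' * X' = transpose_mat (Zm \<gamma>) * Zm \<gamma>"
    unfolding X'_def using orth_pres[OF E.gemb_carrier E.gemb_orth(1)[OF WTc WTo] Xc] g
    by (simp add: Good_def)
  have c1: "X' $$ (r, j) = Zm \<gamma> $$ (r, j)" if j: "j + 1 < Suc m" and r: "r < NN" for j r
  proof (cases "j + 1 < m")
    case True
    have jn: "j < n" using True mn by simp
    have "X' $$ (r, j) = (if r \<in> Ek m then (if zq j \<in> Ek m then transpose_mat W $$ (tk r, tk (zq j)) * zc \<gamma> j else 0)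
        else (if r = zq j then zc \<gamma> j else 0))"
      unfolding X'_def by (rule E.gemb_col_unit[OF Xc jn r]) (use g True jn in \<open>auto simp: Good_def Z_entry\<close>)
    thus ?thesis using True r mn by (auto simp: Z_entry zq_def Ek_def)
  next
    case False
    hence jm: "j = m - 1" using j by simp
    have jn: "j < n" using jm mn by simp
    show ?thesis
    proof (cases "r \<in> Ek m")
      case rE: True
      have "X' $$ (r, j) = (\<Sum>l\<in>Ek m. transpose_mat W $$ (tk r, tk l) * X $$ (l, j))"
        unfolding X'_def using E.gemb_mult_left[OF Xc r jn] rE by simp
      also have "\<dots> = (\<Sum>i\<in>{0..<d + 1}. transpose_mat W $$ (tk r, tk (sk m i)) * X $$ (sk m i, j))"
        by (rule E.reindex)
      also have "\<dots> = (\<Sum>i\<in>{0..<d + 1}. W $$ (i, tk r) * h $ i)"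
        using Wc' E.tau_in[OF rE] E.ts jm unfolding h_def by (intro sum.cong) auto
      also have "\<dots> = a * (if tk r = d then 1 else 0)"
        using e1 E.tau_in[OF rE] hn unfolding W_def by simp
      also have "\<dots> = Zm \<gamma> $$ (r, j)"
        using rE r jm pz m1 mn unfolding a_def by (auto simp: Z_entry tk_def Ek_def p_def)
      finally show ?thesis .
    next
      case rE: False
      have "X' $$ (r, j) = X $$ (r, j)"
        unfolding X'_def using E.gemb_mult_left[OF Xc r jn] rE by simp
      thus ?thesis using Xz[OF r rE] rE r jm jn pz by (auto simp: Z_entry Ek_def p_def)
    qed
  qed
  have c2: "X' $$ (r, j) = 0" if j: "Suc m \<le> j + 1" "j < n" and r: "d + j < r" "r < NN" for j r
  proof -
    have "r \<notin> Ek m" using j r m1 by (auto simp: Ek_def)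
    hence "X' $$ (r, j) = X $$ (r, j)" unfolding X'_def using E.gemb_mult_left[OF Xc r(2) j(2)] by simp
    thus ?thesis using g j r unfolding Good_def by auto
  qed
  have c3: "X' $$ (d + j, j) > 0" if j: "Suc m \<le> j + 1" "j + 1 < n" for j
  proof -
    have "d + j \<notin> Ek m" using j m1 by (auto simp: Ek_def)
    moreover have "d + j < NN" using j by simp
    ultimately have "X' $$ (d + j, j) = X $$ (d + j, j)"
      unfolding X'_def using E.gemb_mult_left[OF Xc, of "d + j" j] j by simp
    thus ?thesis using g j unfolding Good_def by auto
  qed
  have gX': "Good \<gamma> (Suc m) X'" unfolding Good_def using X'c X'X c1 c2 c3 by blast
  obtain th' \<phi> where v': "valid (Suc m) th' \<phi>" and T': "Tm (Suc m) th' \<phi> * Zm \<gamma> = X'"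
  proof -
    have "\<exists>th \<phi>. valid (Suc m) th \<phi> \<and> Tm (Suc m) th \<phi> * Zm \<gamma> = X'"
      by (rule Suc.hyps(1)) (use Suc.hyps(2) mn gX' in auto)
    thus ?thesis using that by blast
  qed
  define th where "th = th'(m - 1 := \<theta>)"
  have "Tm (Suc m) th \<phi> = Tm (Suc m) th' \<phi>"
    by (rule Tm_cong) (use m1 in \<open>auto simp: th_def\<close>)
  hence "Tm m th \<phi> * Zm \<gamma> = gemb NN (Ek m) tk W * X'"
    using Tm_step_gemb[OF m1 mn, of th \<phi> \<gamma>] T' unfolding th_def W_def by simp
  also have "\<dots> = X"
  proof -
    have "gemb NN (Ek m) tk W * X' = gemb NN (Ek m) tk W * (transpose_mat (gemb NN (Ek m) tk W) * X)"
      unfolding X'_def E.gemb_transpose[OF Wc'] by (rule refl)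
    also have "\<dots> = X" by (rule undo_left[OF E.gemb_carrier E.gemb_orth(2)[OF Wc' Wo[folded W_def]] Xc])
    finally show ?thesis .
  qed
  finally have T: "Tm m th \<phi> * Zm \<gamma> = X" .
  have "valid m th \<phi>"
    unfolding valid_def
  proof (rule conjI, intro allI impI)
    fix k assume k: "m \<le> k + 1" "k + 1 < n"
    show "th k \<in> \<Theta> \<and> blkmu d (Vt (th k)) > 0"
    proof (cases "k = m - 1")
      case True thus ?thesis using th Wdd by (simp add: th_def W_def blkmu_def)
    next
      case False
      hence "Suc m \<le> k + 1" using k m1 by simp
      thus ?thesis using v' k False by (simp add: valid_def th_def)
    qed
  next
    show "\<phi> \<in> \<Phi>" using v' by (simp add: valid_def)
  qed
  thus ?case using T by blast
qed

definition Aof :: "real mat \<Rightarrow> real mat" where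
  "Aof X = mat n n (\<lambda>(i, j). X $$ (d - 1 + i, j))"
definition Cof :: "(nat \<Rightarrow> real) \<Rightarrow> real mat \<Rightarrow> real mat" where
  "Cof c X = mat d n (\<lambda>(i, j). if i = 0 then c j else X $$ (i - 1, j))"

lemma KL:
  assumes Xc: "X \<in> carrier_mat NN n" and i: "i < n" and j: "j < n"
  shows "(transpose_mat (Aof X) * Aof X) $$ (i, j) + (transpose_mat (Cof c X) * Cof c X) $$ (i, j)
     = (transpose_mat X * X) $$ (i, j) + c i * c j"
proof -
  define e where "e = d - 1"
  have de: "d = Suc e" using d1 unfolding e_def by simp
  have NNe: "NN = e + n" using d1 unfolding e_def by simp
  have Ac: "Aof X \<in> carrier_mat n n" unfolding Aof_def by (rule mat_carrier)
  have Cc: "Cof c X \<in> carrier_mat d n" unfolding Cof_def by (rule mat_carrier)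
  have a: "(transpose_mat (Aof X) * Aof X) $$ (i, j) = (\<Sum>r\<in>{0..<n}. X $$ (r + e, i) * X $$ (r + e, j))"
    unfolding tmult_entry[OF Ac i j] using i j unfolding Aof_def e_def
    by (intro sum.cong) (auto simp: add.commute)
  have "(transpose_mat (Cof c X) * Cof c X) $$ (i, j) = (\<Sum>r\<in>{0..<Suc e}. Cof c X $$ (r, i) * Cof c X $$ (r, j))"
  proof -
    have "(transpose_mat (Cof c X) * Cof c X) $$ (i, j) = (\<Sum>r\<in>{0..<d}. Cof c X $$ (r, i) * Cof c X $$ (r, j))"
      by (rule tmult_entry[OF Cc i j])
    also have "{0..<d} = {0..<Suc e}" using de by simp
    finally show ?thesis .
  qed
  also have "\<dots> = c i * c j + (\<Sum>r\<in>{0..<e}. X $$ (r, i) * X $$ (r, j))"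
    unfolding sum.atLeast0_lessThan_Suc_shift using i j de unfolding Cof_def by simp
  finally have c: "(transpose_mat (Cof c X) * Cof c X) $$ (i, j) = c i * c j + (\<Sum>r\<in>{0..<e}. X $$ (r, i) * X $$ (r, j))" .
  have "(transpose_mat X * X) $$ (i, j) = (\<Sum>r\<in>{0..<e + n}. X $$ (r, i) * X $$ (r, j))"
    unfolding tmult_entry[OF Xc i j] NNe ..
  also have "\<dots> = (\<Sum>r\<in>{0..<e}. X $$ (r, i) * X $$ (r, j)) + (\<Sum>r\<in>{e..<e + n}. X $$ (r, i) * X $$ (r, j))"
    by (rule sum.atLeastLessThan_concat[symmetric]) auto
  also have "(\<Sum>r\<in>{e..<e + n}. X $$ (r, i) * X $$ (r, j)) = (\<Sum>r\<in>{0..<n}. X $$ (r + e, i) * X $$ (r + e, j))"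
    using sum.shift_bounds_nat_ivl[of "\<lambda>r. X $$ (r, i) * X $$ (r, j)" 0 e n] by (simp add: add.commute)
  finally show ?thesis using a c by simp
qed

definition Dom :: "(real \<times> real vec list \<times> real vec) set" where
  "Dom = {(\<gamma>, ths, \<phi>). 0 < \<gamma> \<and> \<gamma> < 1 \<and> length ths = n - 1 \<and>
              (\<forall>k < n - 1. ths ! k \<in> \<Theta> \<and> blkmu d (Vt (ths ! k)) > 0) \<and> \<phi> \<in> \<Phi>}"

lemma assign_eq:
  "assign n d Vt Vd (\<gamma>, ths, \<phi>) = (Aof (Tm 1 (\<lambda>k. ths ! k) \<phi> * Zm \<gamma>),
      Cof (\<lambda>j. if j = 0 then sqrt (1 - \<gamma>\<^sup>2) else 0) (Tm 1 (\<lambda>k. ths ! k) \<phi> * Zm \<gamma>))"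
  unfolding assign_def stacked_def Tm_def Zm_def Aof_def Cof_def Let_def prod.case by (rule refl)

lemma dom_valid: "(\<gamma>, ths, \<phi>) \<in> Dom \<Longrightarrow> valid 1 (\<lambda>k. ths ! k) \<phi>"
  unfolding Dom_def valid_def by auto

lemma into:
  assumes g: "Good \<gamma> 1 X" and gp: "0 < \<gamma>" and g1: "\<gamma> < 1"
  shows "strict_HOON n d (Aof X) (Cof (\<lambda>j. if j = 0 then sqrt (1 - \<gamma>\<^sup>2) else 0) X)"
proof -
  define c where "c = (\<lambda>j::nat. if j = 0 then sqrt (1 - \<gamma>\<^sup>2) else 0)"
  have Xc: "X \<in> carrier_mat NN n" using g by (simp add: Good_def)
  have Ac: "Aof X \<in> carrier_mat n n" unfolding Aof_def by (rule mat_carrier)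
  have Cc: "Cof c X \<in> carrier_mat d n" unfolding Cof_def by (rule mat_carrier)
  have g2: "\<gamma>\<^sup>2 < 1" using gp g1 by (simp add: power_less_one_iff abs_less_iff)
  have hess: "upper_hessenberg (Aof X)"
    unfolding upper_hessenberg_def
  proof (intro allI impI)
    fix i j assume i: "i < dim_row (Aof X)" and j: "j < dim_col (Aof X)" and ji: "j + 1 < i"
    have i': "i < n" and j': "j < n" using i j Ac by auto
    have "X $$ (d - 1 + i, j) = 0" using g j' ji i' d1 unfolding Good_def by auto
    thus "Aof X $$ (i, j) = 0" unfolding Aof_def using i' j' by simp
  qed
  have c0: "\<forall>j. 0 < j \<and> j < n \<longrightarrow> Cof c X $$ (0, j) = 0"
    unfolding Cof_def c_def using d1 by auto
  have eqn: "transpose_mat (Aof X) * Aof X = 1\<^sub>m n - transpose_mat (Cof c X) * Cof c X"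
  proof (rule eq_matI)
    fix i j assume "i < dim_row (1\<^sub>m n - transpose_mat (Cof c X) * Cof c X)"
      "j < dim_col (1\<^sub>m n - transpose_mat (Cof c X) * Cof c X)"
    hence i: "i < n" and j: "j < n" using Cc by auto
    have k: "(transpose_mat (Aof X) * Aof X) $$ (i, j) = (transpose_mat X * X) $$ (i, j) + c i * c j
        - (transpose_mat (Cof c X) * Cof c X) $$ (i, j)"
      using KL[OF Xc i j, of c] by simp
    have x: "(transpose_mat X * X) $$ (i, j) = (if i = j then (zc \<gamma> i)\<^sup>2 else 0)"
      using g ZtZ[OF i j] by (simp add: Good_def)
    have "(transpose_mat X * X) $$ (i, j) + c i * c j = (if i = j then 1 else 0)"
      unfolding x c_def zc_def using g2 by (auto simp: power2_eq_square[symmetric])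
    thus "(transpose_mat (Aof X) * Aof X) $$ (i, j) = (1\<^sub>m n - transpose_mat (Cof c X) * Cof c X) $$ (i, j)"
      using k i j Cc by simp
  qed (use Ac Cc in auto)
  have sub: "\<forall>i. i + 1 < n \<longrightarrow> Aof X $$ (i + 1, i) > 0"
  proof (intro allI impI)
    fix i assume i: "i + 1 < n"
    have "X $$ (d + i, i) > 0" using g i unfolding Good_def by auto
    moreover have "d - 1 + (i + 1) = d + i" using d1 by simp
    ultimately show "Aof X $$ (i + 1, i) > 0" unfolding Aof_def using i by simp
  qed
  have "Cof c X $$ (0, 0) = sqrt (1 - \<gamma>\<^sup>2)" unfolding Cof_def c_def using d1 n2 by simp
  moreover have "0 < sqrt (1 - \<gamma>\<^sup>2)" using g2 by simp
  moreover have "sqrt (1 - \<gamma>\<^sup>2) < 1" using gp by simp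
  ultimately show ?thesis unfolding strict_HOON_def HOON_def c_def[symmetric]
    using Ac Cc hess c0 eqn sub by auto
qed

lemma main: "bij_betw (assign n d Vt Vd) Dom {(A, C). strict_HOON n d A C}"
  unfolding bij_betw_def
proof (intro conjI)
  show "inj_on (assign n d Vt Vd) Dom"
  proof (rule inj_onI)
    fix t t' assume t: "t \<in> Dom" and t': "t' \<in> Dom" and eq: "assign n d Vt Vd t = assign n d Vt Vd t'"
    obtain \<gamma> ths \<phi> where tt: "t = (\<gamma>, ths, \<phi>)" by (cases t) auto
    obtain \<gamma>' ths' \<phi>' where tt': "t' = (\<gamma>', ths', \<phi>')" by (cases t') auto
    have d: "0 < \<gamma>" "\<gamma> < 1" "length ths = n - 1" "\<phi> \<in> \<Phi>" using t tt by (auto simp: Dom_def)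
    have d': "0 < \<gamma>'" "\<gamma>' < 1" "length ths' = n - 1" "\<phi>' \<in> \<Phi>" using t' tt' by (auto simp: Dom_def)
    define X where "X = Tm 1 (\<lambda>k. ths ! k) \<phi> * Zm \<gamma>"
    define X' where "X' = Tm 1 (\<lambda>k. ths' ! k) \<phi>' * Zm \<gamma>'"
    define c where "c = (\<lambda>j::nat. if j = 0 then sqrt (1 - \<gamma>\<^sup>2) else 0)"
    define c' where "c' = (\<lambda>j::nat. if j = 0 then sqrt (1 - \<gamma>'\<^sup>2) else 0)"
    have AA: "Aof X = Aof X'" and CC: "Cof c X = Cof c' X'"
      using eq unfolding tt tt' assign_eq X_def X'_def c_def c'_def by auto
    have "Cof c X $$ (0, 0) = Cof c' X' $$ (0, 0)" using CC by simp
    hence "sqrt (1 - \<gamma>\<^sup>2) = sqrt (1 - \<gamma>'\<^sup>2)" unfolding Cof_def c_def c'_def using d1 n2 by simp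
    hence "\<gamma>\<^sup>2 = \<gamma>'\<^sup>2" by simp
    hence gg: "\<gamma> = \<gamma>'" using d(1) d'(1) by simp
    have Xc: "X \<in> carrier_mat NN n" unfolding X_def by (rule mult_carrier_mat[OF Tm_carrier Z_carrier])
    have Xc': "X' \<in> carrier_mat NN n" unfolding X'_def by (rule mult_carrier_mat[OF Tm_carrier Z_carrier])
    have XX: "X = X'"
    proof (rule eq_matI)
      fix r j assume "r < dim_row X'" "j < dim_col X'"
      hence r: "r < NN" and j: "j < n" using Xc' by auto
      show "X $$ (r, j) = X' $$ (r, j)"
      proof (cases "r < d - 1")
        case True
        have "Cof c X $$ (r + 1, j) = Cof c' X' $$ (r + 1, j)" using CC by simp
        thus ?thesis unfolding Cof_def using True j by simp
      next
        case False
        have "Aof X $$ (r - (d - 1), j) = Aof X' $$ (r - (d - 1), j)" using AA by simp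
        moreover have "d - 1 + (r - (d - 1)) = r" using False by simp
        moreover have "r - (d - 1) < n" using r False d1 by simp
        ultimately show ?thesis unfolding Aof_def using j by simp
      qed
    qed (use Xc Xc' in auto)
    have "(\<forall>k. 1 \<le> k + 1 \<longrightarrow> k + 1 < n \<longrightarrow> ths ! k = ths' ! k) \<and> \<phi> = \<phi>'"
      by (rule injl[OF d(1) _ order.refl dom_valid[OF t[unfolded tt]]]) (use n2 dom_valid[OF t'[unfolded tt']] XX gg in \<open>auto simp: X_def X'_def\<close>)
    hence "ths = ths' \<and> \<phi> = \<phi>'" using d(3) d'(3) by (auto intro: nth_equalityI)
    thus "t = t'" using tt tt' gg by simp
  qed
next
  show "assign n d Vt Vd ` Dom = {(A, C). strict_HOON n d A C}"
  proof (intro equalityI subsetI)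
    fix y assume "y \<in> assign n d Vt Vd ` Dom"
    then obtain t where t: "t \<in> Dom" and y: "y = assign n d Vt Vd t" by blast
    obtain \<gamma> ths \<phi> where tt: "t = (\<gamma>, ths, \<phi>)" by (cases t) auto
    have d: "0 < \<gamma>" "\<gamma> < 1" using t tt by (auto simp: Dom_def)
    have "Good \<gamma> 1 (Tm 1 (\<lambda>k. ths ! k) \<phi> * Zm \<gamma>)"
      by (rule fwd[OF d(1) _ order.refl dom_valid[OF t[unfolded tt]]]) (use n2 in auto)
    from into[OF this d] show "y \<in> {(A, C). strict_HOON n d A C}" unfolding y tt assign_eq by simp
  next
    fix y assume "y \<in> {(A, C). strict_HOON n d A C}"
    then obtain A C where y: "y = (A, C)" and s: "strict_HOON n d A C" by blast
    have Ac: "A \<in> carrier_mat n n" and Cc: "C \<in> carrier_mat d n" and hess: "upper_hessenberg A"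
      and C0: "\<forall>j. 0 < j \<and> j < n \<longrightarrow> C $$ (0, j) = 0"
      and eqn: "transpose_mat A * A = 1\<^sub>m n - transpose_mat C * C"
      and sub: "\<forall>i. i + 1 < n \<longrightarrow> A $$ (i + 1, i) > 0" and c01: "0 < C $$ (0, 0)" "C $$ (0, 0) < 1"
      using s unfolding strict_HOON_def HOON_def by auto
    define \<gamma> where "\<gamma> = sqrt (1 - (C $$ (0, 0))\<^sup>2)"
    have C2: "(C $$ (0, 0))\<^sup>2 < 1" using c01 by (simp add: power_less_one_iff abs_less_iff)
    have gp: "0 < \<gamma>" using C2 unfolding \<gamma>_def by simp
    have g1: "\<gamma> < 1" unfolding \<gamma>_def using c01 by simp
    have g2: "\<gamma>\<^sup>2 = 1 - (C $$ (0, 0))\<^sup>2" unfolding \<gamma>_def using C2 by simp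
    have sq: "sqrt (1 - \<gamma>\<^sup>2) = C $$ (0, 0)" using g2 c01 by simp
    define c where "c = (\<lambda>j::nat. if j = 0 then sqrt (1 - \<gamma>\<^sup>2) else 0)"
    define X where "X = mat NN n (\<lambda>(r, j). if r < d - 1 then C $$ (r + 1, j) else A $$ (r - (d - 1), j))"
    have Xc: "X \<in> carrier_mat NN n" unfolding X_def by (rule mat_carrier)
    have AX: "Aof X = A"
    proof (rule eq_matI)
      fix i j assume "i < dim_row A" "j < dim_col A"
      hence i: "i < n" and j: "j < n" using Ac by auto
      have "\<not> (d - 1 + i < d - 1)" "d - 1 + i - (d - 1) = i" "d - 1 + i < NN" using i d1 by auto
      thus "Aof X $$ (i, j) = A $$ (i, j)" unfolding Aof_def X_def using i j by simp
    qed (use Ac in \<open>auto simp: Aof_def\<close>)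
    have CX: "Cof c X = C"
    proof (rule eq_matI)
      fix i j assume "i < dim_row C" "j < dim_col C"
      hence i: "i < d" and j: "j < n" using Cc by auto
      show "Cof c X $$ (i, j) = C $$ (i, j)"
      proof (cases "i = 0")
        case True
        thus ?thesis unfolding Cof_def c_def using i j sq C0 by auto
      next
        case False
        hence "i - 1 < d - 1" "i - 1 + 1 = i" "i - 1 < NN" using i n2 by auto
        thus ?thesis unfolding Cof_def X_def using i j False by simp
      qed
    qed (use Cc in \<open>auto simp: Cof_def\<close>)
    have gX: "Good \<gamma> 1 X"
      unfolding Good_def
    proof (intro conjI allI impI)
      show "X \<in> carrier_mat NN n" by (rule Xc)
    next
      show "transpose_mat X * X = transpose_mat (Zm \<gamma>) * Zm \<gamma>"
      proof (rule eq_matI)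
        fix i j assume "i < dim_row (transpose_mat (Zm \<gamma>) * Zm \<gamma>)" "j < dim_col (transpose_mat (Zm \<gamma>) * Zm \<gamma>)"
        hence i: "i < n" and j: "j < n" using Z_carrier[of \<gamma>] by auto
        have k: "(transpose_mat X * X) $$ (i, j) = (transpose_mat A * A) $$ (i, j) + (transpose_mat C * C) $$ (i, j) - c i * c j"
          using KL[OF Xc i j, of c] unfolding AX CX by simp
        have "(transpose_mat A * A) $$ (i, j) + (transpose_mat C * C) $$ (i, j) = (if i = j then 1 else 0)"
          using eqn i j Cc by simp
        moreover have "c i * c j = (if i = 0 \<and> j = 0 then (C $$ (0, 0))\<^sup>2 else 0)"
          unfolding c_def sq by (simp add: power2_eq_square)
        ultimately show "(transpose_mat X * X) $$ (i, j) = (transpose_mat (Zm \<gamma>) * Zm \<gamma>) $$ (i, j)"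
          using k ZtZ[OF i j] g2 by (simp add: zc_def)
      qed (use Xc carrier_matD[OF Z_carrier[of \<gamma>]] in auto)
    next
      fix j r :: nat assume "j + 1 < 1" thus "X $$ (r, j) = Zm \<gamma> $$ (r, j)" by simp
    next
      fix j r :: nat assume j: "1 \<le> j + 1" "j < n" and r: "d + j < r" "r < NN"
      have "r - (d - 1) < n" "j + 1 < r - (d - 1)" using r d1 by auto
      hence "A $$ (r - (d - 1), j) = 0"
        using hess Ac j unfolding upper_hessenberg_def by auto
      thus "X $$ (r, j) = 0" unfolding X_def using j r by simp
    next
      fix j :: nat assume j: "1 \<le> j + 1" "j + 1 < n"
      have "A $$ (j + 1, j) > 0" using sub j by simp
      moreover have "d + j - (d - 1) = j + 1" "\<not> d + j < d - 1" "d + j < NN" using d1 j by auto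
      ultimately show "X $$ (d + j, j) > 0" unfolding X_def using j by simp
    qed
    obtain th \<phi> where v: "valid 1 th \<phi>" and T: "Tm 1 th \<phi> * Zm \<gamma> = X"
      using srj[OF gp _ order.refl gX] n2 by auto
    define ths where "ths = map th [0..<n - 1]"
    have "Tm 1 (\<lambda>k. ths ! k) \<phi> = Tm 1 th \<phi>"
      by (rule Tm_cong) (auto simp: ths_def)
    hence "assign n d Vt Vd (\<gamma>, ths, \<phi>) = (A, C)"
      unfolding assign_eq using T AX CX unfolding c_def by simp
    moreover have "(\<gamma>, ths, \<phi>) \<in> Dom"
      unfolding Dom_def using gp g1 v by (auto simp: ths_def valid_def)
    ultimately show "y \<in> assign n d Vt Vd ` Dom" unfolding y by force
  qed
qed

end

theorem theorem7p4:
  fixes n d :: nat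
    and Vt :: "real vec \<Rightarrow> real mat" and \<Theta> :: "real vec set"
    and Vd :: "real vec \<Rightarrow> real mat" and \<Phi> :: "real vec set"
  assumes "n \<ge> 2" and "1 \<le> d" and "d \<le> n"
    and "ORP (d + 1) (d + 1) Vt \<Theta>"
    and "ORP d d Vd \<Phi>"
  shows "bij_betw (assign n d Vt Vd)
           {(\<gamma>, ths, \<phi>). 0 < \<gamma> \<and> \<gamma> < 1 \<and> length ths = n - 1 \<and>
              (\<forall>k < n - 1. ths ! k \<in> \<Theta> \<and> blkmu d (Vt (ths ! k)) > 0) \<and> \<phi> \<in> \<Phi>}
           {(A, C). strict_HOON n d A C}"
proof -
  interpret H: hoon_setup n d Vt \<Theta> Vd \<Phi> by unfold_locales (use assms in auto)
  show ?thesis using H.main unfolding H.Dom_def .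
qed

end
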